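(* Let $\delta\ge 2$, $n\ge 7\delta-7$ and $s$ be integers with $\delta+1\le s\le n/2$. Then $$\rho_Q\big(K_s\vee(K_{n-2s+1}\cup(s-1)K_1)\big)\ <\ \rho_Q\big(K_\delta\vee(K_{n-2\delta+1}\cup(\delta-1)K_1)\big).$$
   Context: $Q(G)=A(G)+D(G)$ is the signless Laplacian matrix (adjacency matrix plus diagonal degree matrix) and $\rho_Q(G)$ its largest eigenvalue. $K_m$ is the complete graph on $m$ vertices, $tK_1$ the edgeless graph on $t$ vertices, $\cup$ disjoint union, and $G_1\vee G_2$ the join (disjoint union plus all edges between $V(G_1)$ and $V(G_2)$). *)

theory Defs
  imports "Jordan_Normal_Form.Char_Poly"
begin

text \<open>A finite simple graph on the vertex set {0..<n}: a pair (n, adj) with adj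
  a symmetric irreflexive relation (the constructions below preserve this).\<close>

type_synonym sgraph = "nat \<times> (nat \<Rightarrow> nat \<Rightarrow> bool)"

definition nverts :: "sgraph \<Rightarrow> nat" where "nverts G = fst G"
definition adj :: "sgraph \<Rightarrow> nat \<Rightarrow> nat \<Rightarrow> bool" where "adj G = snd G"

definition complete_graph :: "nat \<Rightarrow> sgraph" where
  "complete_graph m = (m, \<lambda>i j. i < m \<and> j < m \<and> i \<noteq> j)"

definition empty_graph :: "nat \<Rightarrow> sgraph" where
  "empty_graph t = (t, \<lambda>i j. False)"

definition disj_union :: "sgraph \<Rightarrow> sgraph \<Rightarrow> sgraph" where
  "disj_union G1 G2 = (nverts G1 + nverts G2,
     \<lambda>i j. (i < nverts G1 \<and> j < nverts G1 \<and> adj G1 i j) \<or>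
           (nverts G1 \<le> i \<and> nverts G1 \<le> j \<and> i < nverts G1 + nverts G2 \<and>
            j < nverts G1 + nverts G2 \<and> adj G2 (i - nverts G1) (j - nverts G1)))"

definition join_graph :: "sgraph \<Rightarrow> sgraph \<Rightarrow> sgraph" where
  "join_graph G1 G2 = (nverts G1 + nverts G2,
     \<lambda>i j. adj (disj_union G1 G2) i j \<or>
           (i < nverts G1 \<and> nverts G1 \<le> j \<and> j < nverts G1 + nverts G2) \<or>
           (j < nverts G1 \<and> nverts G1 \<le> i \<and> i < nverts G1 + nverts G2))"

definition degree :: "sgraph \<Rightarrow> nat \<Rightarrow> nat" where
  "degree G i = card {j. j < nverts G \<and> adj G i j}"

definition adjacency_mat :: "sgraph \<Rightarrow> real mat" where
  "adjacency_mat G = mat (nverts G) (nverts G) (\<lambda>(i, j). if adj G i j then 1 else 0)"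

definition degree_mat :: "sgraph \<Rightarrow> real mat" where
  "degree_mat G = mat (nverts G) (nverts G) (\<lambda>(i, j). if i = j then real (degree G i) else 0)"

definition signless_laplacian :: "sgraph \<Rightarrow> real mat" where
  "signless_laplacian G = adjacency_mat G + degree_mat G"

text \<open>Largest eigenvalue of Q(G) (Q(G) is real symmetric, so all eigenvalues are real).\<close>
definition rhoQ :: "sgraph \<Rightarrow> real" where
  "rhoQ G = Max {k. eigenvalue (signless_laplacian G) k}"

end

theory Submission
  imports Defs
begin

lemma max_eig_pos_vec:
  fixes A :: "real mat"
  assumes A: "A \<in> carrier_mat N N" and nn: "\<And>i j. i<N \<Longrightarrow> j<N \<Longrightarrow> A$$(i,j) \<ge> 0"
   and w: "w \<in> carrier_vec N" and wpos: "\<And>i. i<N \<Longrightarrow> w$i > 0" and N: "N > 0"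
   and ev: "A *\<^sub>v w = r \<cdot>\<^sub>v w"
  shows "Max {k. eigenvalue A k} = r"
proof -
  have cp: "char_poly A \<noteq> 0" using degree_monic_char_poly[OF A] by auto
  have fin: "finite {k. eigenvalue A k}"
    using poly_roots_finite[OF cp] eigenvalue_root_char_poly[OF A] by simp
  have dr: "dim_row A = N" using A by simp
  have "w \<noteq> 0\<^sub>v N" using wpos[OF N] by (metis index_zero_vec(1) less_irrefl N)
  hence rin: "eigenvalue A r" unfolding eigenvalue_def eigenvector_def dr using w ev by blast
  have le: "k \<le> r" if ek: "eigenvalue A k" for k
  proof -
    obtain v where v: "v \<in> carrier_vec N" "v \<noteq> 0\<^sub>v N" "A *\<^sub>v v = k \<cdot>\<^sub>v v"
      using ek unfolding eigenvalue_def eigenvector_def dr by blast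
    define f where "f j = \<bar>v$j\<bar> / w$j" for j
    have ne: "{..<N} \<noteq> {}" using N by auto
    obtain i where i: "i < N" "f i = Max (f ` {..<N})"
    proof -
      have "Max (f ` {..<N}) \<in> f ` {..<N}" using ne by (intro Max_in) auto
      thus ?thesis using that by auto
    qed
    have fi: "f j \<le> f i" if "j < N" for j using i that by auto
    have vi: "v$i \<noteq> 0"
    proof
      assume "v$i = 0"
      hence "f i = 0" unfolding f_def by simp
      have "v$j = 0" if "j<N" for j
      proof -
        have "f j \<le> 0" using fi[OF that] \<open>f i = 0\<close> by simp
        moreover have "f j \<ge> 0" unfolding f_def using wpos[OF that] by simp
        ultimately have "f j = 0" by simp
        thus ?thesis unfolding f_def using wpos[OF that] by simp
      qed
      hence "v = 0\<^sub>v N" using v(1) by (intro eq_vecI) auto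
      thus False using v(2) by simp
    qed
    have bnd: "\<bar>v$j\<bar> \<le> w$j * f i" if "j<N" for j
    proof -
      have "\<bar>v$j\<bar> = w$j * f j" unfolding f_def using wpos[OF that] by simp
      also have "\<dots> \<le> w$j * f i" using fi[OF that] wpos[OF that] by simp
      finally show ?thesis .
    qed
    have "k * v$i = (A *\<^sub>v v)$i" using v(3) v(1) i(1) by simp
    also have "\<dots> = (\<Sum>j<N. A$$(i,j) * v$j)"
      using A v(1) i(1) by (simp add: scalar_prod_def lessThan_atLeast0)
    finally have e1: "k * v$i = (\<Sum>j<N. A$$(i,j) * v$j)" .
    have "r * w$i = (A *\<^sub>v w)$i" using ev w i(1) by simp
    also have "\<dots> = (\<Sum>j<N. A$$(i,j) * w$j)"
      using A w i(1) by (simp add: scalar_prod_def lessThan_atLeast0)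
    finally have e2: "r * w$i = (\<Sum>j<N. A$$(i,j) * w$j)" .
    have "\<bar>k\<bar> * \<bar>v$i\<bar> = \<bar>\<Sum>j<N. A$$(i,j) * v$j\<bar>" using e1 by (simp add: abs_mult[symmetric])
    also have "\<dots> \<le> (\<Sum>j<N. \<bar>A$$(i,j) * v$j\<bar>)" by (rule sum_abs)
    also have "\<dots> \<le> (\<Sum>j<N. A$$(i,j) * (w$j * f i))"
    proof (rule sum_mono)
      fix j assume "j \<in> {..<N}"
      hence j: "j < N" by simp
      show "\<bar>A$$(i,j) * v$j\<bar> \<le> A$$(i,j) * (w$j * f i)"
        using nn[OF i(1) j] bnd[OF j] by (simp add: abs_mult mult_left_mono)
    qed
    also have "\<dots> = (\<Sum>j<N. A$$(i,j) * w$j) * f i" by (simp add: sum_distrib_right mult.assoc)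
    also have "\<dots> = r * w$i * f i" using e2 by simp
    also have "\<dots> = r * \<bar>v$i\<bar>" unfolding f_def using wpos[OF i(1)] by simp
    finally have "\<bar>k\<bar> * \<bar>v$i\<bar> \<le> r * \<bar>v$i\<bar>" .
    hence "\<bar>k\<bar> \<le> r" using vi by simp
    thus ?thesis by simp
  qed
  show ?thesis by (rule Max_eqI[OF fin]) (use le rin in auto)
qed

abbreviation GG :: "nat \<Rightarrow> nat \<Rightarrow> nat \<Rightarrow> sgraph" where
  "GG s m z \<equiv> join_graph (complete_graph s) (disj_union (complete_graph m) (empty_graph z))"

lemma nverts_GG: "nverts (GG s m z) = s + m + z"
  by (simp add: join_graph_def disj_union_def complete_graph_def empty_graph_def nverts_def)

lemma adj_GG: "adj (GG s m z) i j \<longleftrightarrow> i < s+m+z \<and> j < s+m+z \<and> i \<noteq> j \<and>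
   (i < s \<or> j < s \<or> (i < s+m \<and> j < s+m))"
  by (auto simp add: join_graph_def disj_union_def complete_graph_def empty_graph_def nverts_def adj_def)

lemma deg_GG:
  assumes "i < s+m+z"
  shows "degree (GG s m z) i = (if i < s then s+m+z-1 else if i < s+m then s+m-1 else s)"
proof -
  let ?A = "{j. j < nverts (GG s m z) \<and> adj (GG s m z) i j}"
  consider "i < s" | "s \<le> i" "i < s+m" | "s+m \<le> i" by linarith
  thus ?thesis
  proof cases
    case 1
    have "?A = {..<s+m+z} - {i}" using 1 assms by (auto simp: nverts_GG adj_GG)
    thus ?thesis using 1 assms by (simp add: degree_def)
  next
    case 2
    have "?A = {..<s+m} - {i}" using 2 assms by (auto simp: nverts_GG adj_GG)
    thus ?thesis using 2 assms by (simp add: degree_def)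
  next
    case 3
    have "?A = {..<s}" using 3 assms by (auto simp: nverts_GG adj_GG)
    thus ?thesis using 3 assms by (simp add: degree_def)
  qed
qed

lemma rho_GG:
  fixes b c r :: real
  assumes s: "s \<ge> 1" and m: "m \<ge> 1" and b: "b > 0" and c: "c > 0"
    and eX: "(real (s+m+z) - 1) + (real s - 1) + real m * b + real z * c = r"
    and eY: "real s + (real m - 1) * b + (real s + real m - 1) * b = r * b"
    and eZ: "real s + real s * c = r * c"
  shows "rhoQ (GG s m z) = r"
proof -
  define N where "N = s+m+z"
  define Q where "Q = signless_laplacian (GG s m z)"
  define w :: "real vec" where "w = vec N (\<lambda>j. if j < s then 1 else if j < s+m then b else c)"
  have QN: "Q \<in> carrier_mat N N"
    by (simp add: Q_def signless_laplacian_def adjacency_mat_def degree_mat_def nverts_GG N_def)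
  have Qij: "Q$$(i,j) = (if adj (GG s m z) i j then 1 else 0) + (if i = j then real (degree (GG s m z) i) else 0)"
    if "i < N" "j < N" for i j
    using that by (simp add: Q_def signless_laplacian_def adjacency_mat_def degree_mat_def nverts_GG N_def)
  have wN: "w \<in> carrier_vec N" by (simp add: w_def)
  have wpos: "w$i > 0" if "i < N" for i using that b c by (simp add: w_def)
  have s1: "sum (($) w) {..<s} = real s"
  proof -
    have "sum (($) w) {..<s} = sum (\<lambda>_. 1) {..<s}" by (rule sum.cong) (auto simp: w_def N_def)
    thus ?thesis by simp
  qed
  have s2: "sum (($) w) {s..<s+m} = real m * b"
  proof -
    have "sum (($) w) {s..<s+m} = sum (\<lambda>_. b) {s..<s+m}" by (rule sum.cong) (auto simp: w_def N_def)
    thus ?thesis by simp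
  qed
  have s3: "sum (($) w) {s+m..<N} = real z * c"
  proof -
    have "sum (($) w) {s+m..<N} = sum (\<lambda>_. c) {s+m..<N}" by (rule sum.cong) (auto simp: w_def N_def)
    thus ?thesis by (simp add: N_def)
  qed
  have s12: "sum (($) w) {..<s+m} = real s + real m * b"
  proof -
    have "{..<s+m} = {..<s} \<union> {s..<s+m}" by auto
    hence "sum (($) w) {..<s+m} = sum (($) w) {..<s} + sum (($) w) {s..<s+m}"
      by (metis sum.union_disjoint finite_lessThan finite_atLeastLessThan ivl_disj_int_one(2) lessThan_atLeast0)
    thus ?thesis using s1 s2 by simp
  qed
  have s123: "sum (($) w) {..<N} = real s + real m * b + real z * c"
  proof -
    have "{..<N} = {..<s+m} \<union> {s+m..<N}" by (auto simp: N_def)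
    hence "sum (($) w) {..<N} = sum (($) w) {..<s+m} + sum (($) w) {s+m..<N}"
      by (metis sum.union_disjoint finite_lessThan finite_atLeastLessThan ivl_disj_int_one(2) lessThan_atLeast0)
    thus ?thesis using s12 s3 by simp
  qed
  have row: "(Q *\<^sub>v w)$i = sum (($) w) {j. j < N \<and> adj (GG s m z) i j} + real (degree (GG s m z) i) * w$i"
    if i: "i < N" for i
  proof -
    have "(Q *\<^sub>v w)$i = (\<Sum>j<N. Q$$(i,j) * w$j)"
      using QN wN i by (simp add: scalar_prod_def lessThan_atLeast0)
    also have "\<dots> = (\<Sum>j<N. (if adj (GG s m z) i j then w$j else 0) + (if i = j then real (degree (GG s m z) i) * w$j else 0))"
      by (rule sum.cong) (auto simp: Qij i adj_GG)
    also have "\<dots> = (\<Sum>j<N. (if adj (GG s m z) i j then w$j else 0)) + real (degree (GG s m z) i) * w$i"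
      using i by (simp add: sum.distrib)
    also have "(\<Sum>j<N. (if adj (GG s m z) i j then w$j else 0)) = sum (($) w) {j. j < N \<and> adj (GG s m z) i j}"
      by (simp add: sum.inter_filter[symmetric])
    finally show ?thesis .
  qed
  have ev: "Q *\<^sub>v w = r \<cdot>\<^sub>v w"
  proof (rule eq_vecI)
    show "dim_vec (Q *\<^sub>v w) = dim_vec (r \<cdot>\<^sub>v w)" using QN wN by simp
    fix i assume "i < dim_vec (r \<cdot>\<^sub>v w)"
    hence i: "i < N" using wN by simp
    have rhs: "(r \<cdot>\<^sub>v w)$i = r * w$i" using i wN by simp
    consider "i < s" | "s \<le> i" "i < s+m" | "s+m \<le> i" by linarith
    thus "(Q *\<^sub>v w)$i = (r \<cdot>\<^sub>v w)$i"
    proof cases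
      case 1
      have A: "{j. j < N \<and> adj (GG s m z) i j} = {..<N} - {i}" using 1 i by (auto simp: adj_GG N_def)
      have "sum (($) w) ({..<N} - {i}) = sum (($) w) {..<N} - w$i" using i by (simp add: sum_diff1)
      moreover have "w$i = 1" using 1 i by (simp add: w_def)
      moreover have "real (degree (GG s m z) i) = real N - 1" using 1 i s by (simp add: deg_GG N_def of_nat_diff)
      ultimately show ?thesis using row[OF i] A rhs s123 eX by (simp add: N_def)
    next
      case 2
      have A: "{j. j < N \<and> adj (GG s m z) i j} = {..<s+m} - {i}" using 2 i by (auto simp: adj_GG N_def)
      have "sum (($) w) ({..<s+m} - {i}) = sum (($) w) {..<s+m} - w$i" using 2 by (simp add: sum_diff1)
      moreover have "w$i = b" using 2 i by (simp add: w_def)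
      moreover have dg: "real (degree (GG s m z) i) = real s + real m - 1" using 2 i s by (simp add: deg_GG N_def of_nat_diff)
      ultimately have "(Q *\<^sub>v w)$i = real s + real m * b - b + (real s + real m - 1) * b"
        using row[OF i] A s12 by simp
      also have "\<dots> = r * b" using eY by (simp add: algebra_simps)
      finally show ?thesis using rhs \<open>w$i = b\<close> by simp
    next
      case 3
      have A: "{j. j < N \<and> adj (GG s m z) i j} = {..<s}" using 3 i by (auto simp: adj_GG N_def)
      moreover have "w$i = c" using 3 i by (simp add: w_def)
      moreover have "real (degree (GG s m z) i) = real s" using 3 i s by (simp add: deg_GG N_def)
      ultimately show ?thesis using row[OF i] rhs s1 eZ by (simp add: algebra_simps)
    qed
  qed
  have nn: "Q$$(i,j) \<ge> 0" if "i<N" "j<N" for i j using Qij[OF that] by simp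
  have "Max {k. eigenvalue Q k} = r"
    by (rule max_eig_pos_vec[OF QN nn wN wpos _ ev]) (use s in \<open>auto simp: N_def\<close>)
  thus ?thesis by (simp add: rhoQ_def Q_def)
qed

definition fc :: "real \<Rightarrow> real \<Rightarrow> real \<Rightarrow> real" where
  "fc n s x = x^3 + x^2*(2+s-3*n) + x*(2*n^2 - 4*n + n*s + 4*s - 4*s^2)
     + (-2*s^3 - 2*s^2 + 4*n*s^2 + 2*n*s - 2*n^2*s)"

lemma rho_root:
  fixes s n :: nat and r :: real
  assumes s: "s \<ge> 2" and n: "2*s \<le> n" and f: "fc (real n) (real s) r = 0"
    and r: "r > 2*real n - 2*real s"
  shows "rhoQ (GG s (n-2*s+1) (s-1)) = r"
proof -
  define m where "m = n-2*s+1"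
  define z where "z = s-1"
  have mr: "real m = real n - 2*real s + 1" using n by (simp add: m_def of_nat_diff)
  have zr: "real z = real s - 1" using s by (simp add: z_def of_nat_diff)
  have Nr: "real (s+m+z) = real n" using mr zr by simp
  define D1 where "D1 = r - 2*real n + 3*real s"
  define D2 where "D2 = r - real s"
  have D1: "D1 > 0" using r s unfolding D1_def by simp
  have D2: "D2 > 0" using r n unfolding D2_def by simp
  define b where "b = real s / D1"
  define c where "c = real s / D2"
  have b: "b > 0" using D1 s by (simp add: b_def)
  have c: "c > 0" using D2 s by (simp add: c_def)
  have eY: "real s + (real m - 1) * b + (real s + real m - 1) * b = r * b"
  proof -
    have "b * D1 = real s" using D1 by (simp add: b_def)
    thus ?thesis unfolding mr D1_def by (simp add: algebra_simps)
  qed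
  have eZ: "real s + real s * c = r * c"
  proof -
    have "c * D2 = real s" using D2 by (simp add: c_def)
    thus ?thesis unfolding D2_def by (simp add: algebra_simps)
  qed
  have key: "((real n + real s - 2) - r) * D1 * D2 + real m * real s * D2 + real z * real s * D1
     = - fc (real n) (real s) r"
    unfolding mr zr D1_def D2_def fc_def by (simp add: algebra_simps power2_eq_square power3_eq_cube)
  hence key0: "((real n + real s - 2) - r) * D1 * D2 + real m * real s * D2 + real z * real s * D1 = 0"
    using f by simp
  have eX: "(real (s+m+z) - 1) + (real s - 1) + real m * b + real z * c = r"
  proof -
    have "((real n + real s - 2) - r) + real m * b + real z * c
        = (((real n + real s - 2) - r) * D1 * D2 + real m * real s * D2 + real z * real s * D1) / (D1 * D2)"
      using D1 D2 by (simp add: b_def c_def field_simps)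
    also have "\<dots> = 0" using key0 by simp
    finally show ?thesis unfolding Nr by simp
  qed
  have "m \<ge> 1" by (simp add: m_def)
  from rho_GG[OF _ this b c eX eY eZ] s show ?thesis by (simp add: m_def z_def)
qed

lemma fc_cont: "continuous_on A (fc n s)"
  unfolding fc_def by (intro continuous_intros)

lemma fc_shift: "fc n s (2*n-2*s+t) = t^3 + 3*t^2*n - 5*t^2*s + 2*t^2 + 2*t*n^2 - 7*t*n*s + 4*t*n
   + 4*t*s^2 - 4*t*s - 2*n*s^2 + 2*n*s + 2*s^3 - 2*s^2"
  unfolding fc_def by (simp add: algebra_simps power2_eq_square power3_eq_cube)

lemma fc_diff: "fc n s x - fc n d x = (s-d) * (-2*(s^2+s*d+d^2) + (4*n-4*x-2)*(s+d) + (x^2+n*x+4*x+2*n-2*n^2))"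
  unfolding fc_def by (simp add: algebra_simps power2_eq_square power3_eq_cube)

lemma H_shift: fixes n s d t :: real shows "-2*(s^2+s*d+d^2) + (4*n-4*(2*n-2*d+t)-2)*(s+d) + ((2*n-2*d+t)^2+n*(2*n-2*d+t)+4*(2*n-2*d+t)+2*n-2*n^2)
  = t^2 + t*(5*n-4*s-8*d+4) + (4*n^2 - 4*n*s - 14*n*d + 10*n - 2*s^2 + 6*s*d - 2*s + 10*d^2 - 10*d)"
  by (simp add: algebra_simps power2_eq_square)

lemma h0_pos:
  fixes n s d :: real
  assumes d: "d \<ge> 2" and n: "n \<ge> 7*d-7" and s1: "d+1 \<le> s" and s2: "2*s \<le> n"
  shows "4*n^2 - 4*n*s - 14*n*d + 10*n - 2*s^2 + 6*s*d - 2*s + 10*d^2 - 10*d > 0"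
proof -
  define h where "h x = 4*n^2 - 4*n*x - 14*n*d + 10*n - 2*x^2 + 6*x*d - 2*x + 10*d^2 - 10*d" for x
  define k where "k = n - (7*d-7)"
  define e where "e = d - 2"
  have k: "k \<ge> 0" and e: "e \<ge> 0" using n d by (auto simp: k_def e_def)
  have nk: "n = 7*(e+2)-7+k" and de: "d = e+2" by (auto simp: k_def e_def)
  have "h (d+1) = 4*k^2 + 38*k*e + 26*k + 84*e^2 + 102*e + 18"
    unfolding h_def nk de by (simp add: algebra_simps power2_eq_square)
  also have "\<dots> > 0"
  proof -
    have "k^2 \<ge> 0" "e^2 \<ge> 0" "k*e \<ge> 0" using k e by auto
    thus ?thesis using k e by linarith
  qed
  finally have h1: "h (d+1) > 0" .
  have "2 * h (n/2) = 2 * (3/2*k^2 + 10*k*e + 8*k + 13/2*e^2 + 9*e + 5/2)"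
    unfolding h_def nk de by (simp add: field_simps power2_eq_square)
  hence "h (n/2) = 3/2*k^2 + 10*k*e + 8*k + 13/2*e^2 + 9*e + 5/2" by simp
  also have "\<dots> > 0"
  proof -
    have "k^2 \<ge> 0" "e^2 \<ge> 0" "k*e \<ge> 0" using k e by auto
    thus ?thesis using k e by linarith
  qed
  finally have h2: "h (n/2) > 0" .
  have gap: "n/2 - (d+1) > 0" using n d by simp
  have "(n/2 - (d+1)) * h s = (n/2 - s) * h (d+1) + (s - (d+1)) * h (n/2) + 2*(s-(d+1))*(n/2-s)*(n/2-(d+1))"
    unfolding h_def by (simp add: field_simps power2_eq_square)
  also have "\<dots> > 0"
  proof -
    have a: "n/2 - s \<ge> 0" "s - (d+1) \<ge> 0" using s1 s2 by auto
    have "(n/2 - s) * h (d+1) + (s - (d+1)) * h (n/2) > 0"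
    proof (cases "n/2 - s > 0")
      case True thus ?thesis using h1 h2 a by (simp add: add_pos_nonneg)
    next
      case False hence "s - (d+1) > 0" using gap a by linarith
      thus ?thesis using h1 h2 a by (simp add: add_nonneg_pos)
    qed
    moreover have "2*(s-(d+1))*(n/2-s)*(n/2-(d+1)) \<ge> 0" using a gap by simp
    ultimately show ?thesis by linarith
  qed
  finally have "(n/2 - (d+1)) * h s > 0" .
  hence "h s > 0" using gap by (simp add: zero_less_mult_iff)
  thus ?thesis unfolding h_def .
qed

theorem mainTheorem5:
  fixes \<delta> n s :: nat
  assumes "\<delta> \<ge> 2" and "n \<ge> 7 * \<delta> - 7"
    and "\<delta> + 1 \<le> s" and "2 * s \<le> n"
  shows "rhoQ (join_graph (complete_graph s)
                 (disj_union (complete_graph (n - 2 * s + 1)) (empty_graph (s - 1))))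
       < rhoQ (join_graph (complete_graph \<delta>)
                 (disj_union (complete_graph (n - 2 * \<delta> + 1)) (empty_graph (\<delta> - 1))))"
proof -
  define N where "N = real n"
  define d where "d = real \<delta>"
  define S where "S = real s"
  have d2: "d \<ge> 2" using assms(1) by (simp add: d_def)
  have nb: "N \<ge> 7*d - 7" using assms(1,2) by (simp add: N_def d_def of_nat_diff)
  have s1: "d + 1 \<le> S" using assms(3) by (simp add: d_def S_def)
  have s2: "2*S \<le> N" using assms(4) by (simp add: N_def S_def)
  have dn: "2*\<delta> \<le> n" using assms by simp
  have fd0: "fc N d (2*N-2*d) < 0"
  proof -
    have "fc N d (2*N-2*d) = fc N d (2*N-2*d+0)" by simp
    also have "\<dots> = -2*d*(d-1)*(N-d)" unfolding fc_shift by (simp add: algebra_simps power2_eq_square power3_eq_cube)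
    also have "\<dots> < 0" using d2 s1 s2 by (simp add: mult_pos_pos)
    finally show ?thesis .
  qed
  have fd1: "fc N d (2*N-2*d+N) > 0"
  proof -
    have "fc N d (2*N-2*d+N) = N^3 + 3*N^2*N - 5*N^2*d + 2*N^2 + 2*N*N^2 - 7*N*N*d + 4*N*N
   + 4*N*d^2 - 4*N*d - 2*N*d^2 + 2*N*d + 2*d^3 - 2*d^2" by (rule fc_shift)
    also have "\<dots> = 6*N^2*(N-2*d) + 2*N*(3*N - d) + 2*N*d^2 + 2*d^2*(d-1)"
      by (simp add: algebra_simps power2_eq_square power3_eq_cube)
    also have "\<dots> > 0"
    proof -
      have "N > 0" using s1 s2 d2 by simp
      have "6*N^2*(N-2*d) \<ge> 0" using s1 s2 by simp
      moreover have "2*N*(3*N - d) > 0" using \<open>N>0\<close> s1 s2 by simp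
      moreover have "2*N*d^2 \<ge> 0" using \<open>N>0\<close> by simp
      moreover have "2*d^2*(d-1) \<ge> 0" using d2 by simp
      ultimately show ?thesis by linarith
    qed
    finally show ?thesis .
  qed
  have "\<exists>x. 2*N-2*d \<le> x \<and> x \<le> 2*N-2*d+N \<and> fc N d x = 0"
    by (rule IVT'[OF _ _ _ fc_cont]) (use fd0 fd1 s1 s2 d2 in auto)
  then obtain rd where rd: "2*N-2*d \<le> rd" "rd \<le> 2*N-2*d+N" "fc N d rd = 0" by blast
  have rdgt: "rd > 2*N-2*d" using rd fd0 by (cases "rd = 2*N-2*d") auto
  have rhod: "rhoQ (GG \<delta> (n-2*\<delta>+1) (\<delta>-1)) = rd"
    by (rule rho_root) (use assms dn rd rdgt in \<open>auto simp: N_def d_def\<close>)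
  have fs0: "fc N S (2*N-2*S) < 0"
  proof -
    have "fc N S (2*N-2*S) = fc N S (2*N-2*S+0)" by simp
    also have "\<dots> = -2*S*(S-1)*(N-S)" unfolding fc_shift by (simp add: algebra_simps power2_eq_square power3_eq_cube)
    also have "\<dots> < 0" using d2 s1 s2 by (simp add: mult_pos_pos)
    finally show ?thesis .
  qed
  have fs1: "fc N S rd > 0"
  proof -
    define t where "t = rd - (2*N-2*d)"
    have t: "t > 0" using rdgt by (simp add: t_def)
    have rdt: "rd = 2*N-2*d+t" by (simp add: t_def)
    have "fc N S rd = fc N S rd - fc N d rd" using rd by simp
    also have "\<dots> = (S-d) * (t^2 + t*(5*N-4*S-8*d+4) + (4*N^2 - 4*N*S - 14*N*d + 10*N - 2*S^2 + 6*S*d - 2*S + 10*d^2 - 10*d))"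
      unfolding fc_diff rdt H_shift ..
    also have "\<dots> > 0"
    proof -
      have "t*(5*N-4*S-8*d+4) \<ge> 0" using t s2 nb d2 by simp
      moreover have "t^2 \<ge> 0" by simp
      moreover note h0_pos[OF d2 nb s1 s2]
      ultimately show ?thesis using s1 by (simp add: add_nonneg_pos)
    qed
    finally show ?thesis .
  qed
  have le: "2*N-2*S \<le> rd" using rdgt s1 by simp
  have "\<exists>x. 2*N-2*S \<le> x \<and> x \<le> rd \<and> fc N S x = 0"
    by (rule IVT'[OF _ _ le fc_cont]) (use fs0 fs1 in auto)
  then obtain rs where rs: "2*N-2*S \<le> rs" "rs \<le> rd" "fc N S rs = 0" by blast
  have rsgt: "rs > 2*N-2*S" using rs fs0 by (cases "rs = 2*N-2*S") auto
  have rslt: "rs < rd" using rs fs1 by (cases "rs = rd") auto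
  have rhos: "rhoQ (GG s (n-2*s+1) (s-1)) = rs"
    by (rule rho_root) (use assms rs rsgt in \<open>auto simp: N_def S_def\<close>)
  show ?thesis using rhos rhod rslt by simp
qed

end
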